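(* Let $\mathcal P_1$ and $\mathcal P_2$ be two shortest paths between nodes $u_0$ and $u_1$, and let $u_2$ be a node on $\mathcal P_2$ distinct from $u_0,u_1$. Consider the shortest-path triangle $\Delta_{\{u_0,u_1,u_2\}}$ whose sides are $\mathcal P_1$ and the two subpaths of $\mathcal P_2$ from $u_0$ to $u_2$ and from $u_2$ to $u_1$. Then the Hausdorff distance satisfies $$d_H(\mathcal P_1,\mathcal P_2)=\max\Big\{\max_{v_1\in\mathcal P_1}\min_{v_2\in\mathcal P_2}d_{v_1,v_2},\ \max_{v_2\in\mathcal P_2}\min_{v_1\in\mathcal P_1}d_{v_1,v_2}\Big\}\le 6\,\delta_{\Delta_{\{u_0,u_1,u_2\}}}+2.$$
   Context: $G=(V,E)$ is a finite connected undirected graph with $n\ge 4$ nodes and $d_{u,v}$ denotes the shortest-path distance (number of edges). For any four nodes $w_1,w_2,w_3,w_4$, form the three sums $d_{w_1,w_2}+d_{w_3,w_4}$, $d_{w_1,w_3}+d_{w_2,w_4}$, $d_{w_1,w_4}+d_{w_2,w_3}$, order them as $S\le M\le L$, and set $\delta_{w_1,w_2,w_3,w_4}=(L-M)/2$. A shortest-path triangle $\Delta_{\{u_0,u_1,u_2\}}$ consists of three distinct nodes with chosen shortest paths between each pair; $\delta_{\Delta_{\{u_0,u_1,u_2\}}}$ is the maximum of $\delta_{w_1,w_2,w_3,w_4}$ over all quadruples of nodes lying on these three paths. *)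

theory Defs
  imports Complex_Main
begin

text \<open>Walks/paths are non-empty
  vertex lists; the length of a walk is the number of edges (length - 1).\<close>

definition graph :: "'a set \<Rightarrow> ('a \<Rightarrow> 'a \<Rightarrow> bool) \<Rightarrow> bool" where
  "graph V E \<longleftrightarrow> finite V \<and> (\<forall>x y. E x y \<longrightarrow> x \<in> V \<and> y \<in> V)
     \<and> (\<forall>x y. E x y \<longrightarrow> E y x) \<and> (\<forall>x. \<not> E x x)"

definition walk :: "('a \<Rightarrow> 'a \<Rightarrow> bool) \<Rightarrow> 'a list \<Rightarrow> bool" where
  "walk E p \<longleftrightarrow> p \<noteq> [] \<and> (\<forall>i. Suc i < length p \<longrightarrow> E (p ! i) (p ! Suc i))"

definition connected_graph :: "'a set \<Rightarrow> ('a \<Rightarrow> 'a \<Rightarrow> bool) \<Rightarrow> bool" where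
  "connected_graph V E \<longleftrightarrow> graph V E \<and> V \<noteq> {} \<and>
     (\<forall>u\<in>V. \<forall>v\<in>V. \<exists>p. walk E p \<and> hd p = u \<and> last p = v)"

definition gdist :: "('a \<Rightarrow> 'a \<Rightarrow> bool) \<Rightarrow> 'a \<Rightarrow> 'a \<Rightarrow> nat" where
  "gdist E u v = (LEAST n. \<exists>p. walk E p \<and> hd p = u \<and> last p = v \<and> length p = Suc n)"

definition shortest_path :: "('a \<Rightarrow> 'a \<Rightarrow> bool) \<Rightarrow> 'a \<Rightarrow> 'a \<Rightarrow> 'a list \<Rightarrow> bool" where
  "shortest_path E u v p \<longleftrightarrow> walk E p \<and> hd p = u \<and> last p = v \<and> length p = Suc (gdist E u v)"

definition delta4 :: "('a \<Rightarrow> 'a \<Rightarrow> bool) \<Rightarrow> 'a \<Rightarrow> 'a \<Rightarrow> 'a \<Rightarrow> 'a \<Rightarrow> real" where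
  "delta4 E w1 w2 w3 w4 =
     (let s = sort [gdist E w1 w2 + gdist E w3 w4, gdist E w1 w3 + gdist E w2 w4,
                    gdist E w1 w4 + gdist E w2 w3]
      in (real (s ! 2) - real (s ! 1)) / 2)"

definition delta_tri :: "('a \<Rightarrow> 'a \<Rightarrow> bool) \<Rightarrow> 'a list \<Rightarrow> 'a list \<Rightarrow> 'a list \<Rightarrow> real" where
  "delta_tri E p q r =
     (let S = set p \<union> set q \<union> set r in
      Max {delta4 E w1 w2 w3 w4 | w1 w2 w3 w4. w1 \<in> S \<and> w2 \<in> S \<and> w3 \<in> S \<and> w4 \<in> S})"

definition hausdorff :: "('a \<Rightarrow> 'a \<Rightarrow> bool) \<Rightarrow> 'a list \<Rightarrow> 'a list \<Rightarrow> nat" where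
  "hausdorff E p q =
     max (Max ((\<lambda>v1. Min ((\<lambda>v2. gdist E v1 v2) ` set q)) ` set p))
         (Max ((\<lambda>v2. Min ((\<lambda>v1. gdist E v1 v2) ` set p)) ` set q))"

end

theory Submission
  imports Defs
begin

lemma gdist_le:
  assumes "walk E p" "hd p = u" "last p = v"
  shows "gdist E u v \<le> length p - 1"
proof -
  have "p \<noteq> []" using assms(1) by (simp add: walk_def)
  then have "length p = Suc (length p - 1)" by simp
  then show ?thesis unfolding gdist_def using assms
    by (metis (mono_tags, lifting) Least_le)
qed

lemma walk_take:
  assumes "walk E p" "n > 0"
  shows "walk E (take n p)"
  using assms unfolding walk_def by auto

lemma walk_drop:
  assumes "walk E p" "n < length p"
  shows "walk E (drop n p)"
  using assms unfolding walk_def by (auto simp: add.commute)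

lemma walk_rev:
  assumes "walk E p" "\<forall>x y. E x y \<longrightarrow> E y x"
  shows "walk E (rev p)"
  unfolding walk_def
proof (intro conjI allI impI)
  show "rev p \<noteq> []" using assms by (simp add: walk_def)
next
  fix i assume i: "Suc i < length (rev p)"
  let ?n = "length p"
  have e: "E (p ! (?n - Suc (Suc i))) (p ! Suc (?n - Suc (Suc i)))"
    using assms(1) i unfolding walk_def by auto
  have "Suc (?n - Suc (Suc i)) = ?n - Suc i" using i by simp
  then have "E (p ! (?n - Suc i)) (p ! (?n - Suc (Suc i)))" using e assms(2) by metis
  then show "E (rev p ! i) (rev p ! Suc i)" using i by (simp add: rev_nth)
qed

lemma sort3:
  fixes a b c :: nat
  assumes "a \<le> c" "b \<le> c"
  shows "sort [c, a, b] ! 2 = c \<and> sort [c, a, b] ! 1 = max a b"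
  using assms by (cases "a \<le> b") auto

lemma core:
  assumes sym: "\<forall>x y. E x y \<longrightarrow> E y x"
    and s1: "shortest_path E u0 u1 P1" and s2: "shortest_path E u0 u1 P2"
    and i: "i < length P1"
  shows "real (gdist E (P1 ! i) (P2 ! i)) \<le> 2 * delta4 E u0 u1 (P1 ! i) (P2 ! i)"
proof -
  define L where "L = gdist E u0 u1"
  define x where "x = P1 ! i"
  define y where "y = P2 ! i"
  have l1: "length P1 = Suc L" and l2: "length P2 = Suc L"
    using s1 s2 by (auto simp: shortest_path_def L_def)
  have w1: "walk E P1" "hd P1 = u0" "last P1 = u1" and w2: "walk E P2" "hd P2 = u0" "last P2 = u1"
    using s1 s2 by (auto simp: shortest_path_def)
  have ne1: "P1 \<noteq> []" and ne2: "P2 \<noteq> []" using l1 l2 by auto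
  have iL: "i \<le> L" using i l1 by simp
  have a1: "gdist E u0 x \<le> i"
  proof -
    have "hd (take (Suc i) P1) = u0" using w1 ne1 by simp
    moreover have "last (take (Suc i) P1) = x" using i by (simp add: take_Suc_conv_app_nth x_def)
    ultimately show ?thesis using gdist_le[OF walk_take[OF w1(1), of "Suc i"]] i by simp
  qed
  have a2: "gdist E u0 y \<le> i"
  proof -
    have i2: "i < length P2" using i l1 l2 by simp
    have "hd (take (Suc i) P2) = u0" using w2 ne2 by simp
    moreover have "last (take (Suc i) P2) = y" using i2 by (simp add: take_Suc_conv_app_nth y_def)
    ultimately show ?thesis using gdist_le[OF walk_take[OF w2(1), of "Suc i"]] i2 by simp
  qed
  have b1: "gdist E u1 x \<le> L - i"
  proof -
    have "walk E (rev (drop i P1))" using walk_rev[OF walk_drop[OF w1(1) i] sym] .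
    moreover have "hd (rev (drop i P1)) = u1" using i w1 ne1
      by (simp add: hd_rev last_drop)
    moreover have "last (rev (drop i P1)) = x" using i
      by (simp add: last_rev hd_drop_conv_nth x_def)
    ultimately show ?thesis using gdist_le[of E "rev (drop i P1)" u1 x] l1 by simp
  qed
  have b2: "gdist E u1 y \<le> L - i"
  proof -
    have i2: "i < length P2" using i l1 l2 by simp
    have "walk E (rev (drop i P2))" using walk_rev[OF walk_drop[OF w2(1) i2] sym] .
    moreover have "hd (rev (drop i P2)) = u1" using i2 w2 ne2
      by (simp add: hd_rev last_drop)
    moreover have "last (rev (drop i P2)) = y" using i2
      by (simp add: last_rev hd_drop_conv_nth y_def)
    ultimately show ?thesis using gdist_le[of E "rev (drop i P2)" u1 y] l2 by simp
  qed
  define a where "a = gdist E u0 x + gdist E u1 y"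
  define b where "b = gdist E u0 y + gdist E u1 x"
  define c where "c = gdist E u0 u1 + gdist E x y"
  have "a \<le> L" "b \<le> L" using a1 a2 b1 b2 iL by (auto simp: a_def b_def)
  then have "a \<le> c" "b \<le> c" by (auto simp: c_def L_def)
  then have "delta4 E u0 u1 x y = (real c - real (max a b)) / 2"
    unfolding delta4_def Let_def using sort3[of a c b]
    by (simp add: a_def b_def c_def)
  moreover have "real (max a b) \<le> real L" using \<open>a \<le> L\<close> \<open>b \<le> L\<close> by simp
  moreover have "real c = real L + real (gdist E x y)" by (simp add: c_def L_def)
  ultimately have "real (gdist E x y) \<le> 2 * delta4 E u0 u1 x y"
  proof -
    assume d: "delta4 E u0 u1 x y = (real c - real (max a b)) / 2"
      and m: "real (max a b) \<le> real L" and c: "real c = real L + real (gdist E x y)"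
    have "2 * delta4 E u0 u1 x y = real c - real (max a b)" using d by simp
    then show ?thesis using m c by linarith
  qed
  then show ?thesis by (simp add: x_def y_def)
qed

lemma max_ge:
  fixes f :: "'a \<Rightarrow> 'a \<Rightarrow> 'a \<Rightarrow> 'a \<Rightarrow> real"
  assumes "finite S" "w1 \<in> S" "w2 \<in> S" "w3 \<in> S" "w4 \<in> S"
  shows "f w1 w2 w3 w4 \<le> Max {f w1 w2 w3 w4 | w1 w2 w3 w4. w1 \<in> S \<and> w2 \<in> S \<and> w3 \<in> S \<and> w4 \<in> S}"
proof (rule Max_ge)
  have "{f w1 w2 w3 w4 | w1 w2 w3 w4. w1 \<in> S \<and> w2 \<in> S \<and> w3 \<in> S \<and> w4 \<in> S}
     \<subseteq> (\<lambda>(a,b,c,d). f a b c d) ` (S \<times> S \<times> S \<times> S)" by force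
  then show "finite {f w1 w2 w3 w4 | w1 w2 w3 w4. w1 \<in> S \<and> w2 \<in> S \<and> w3 \<in> S \<and> w4 \<in> S}"
    using assms(1) by (meson finite_SigmaI finite_imageI finite_subset)
qed (use assms in blast)

theorem corollary3:
  fixes V :: "'a set" and E :: "'a \<Rightarrow> 'a \<Rightarrow> bool"
    and P1 P2 :: "'a list" and u0 u1 u2 :: 'a and k :: nat
  assumes "connected_graph V E" and "card V \<ge> 4"
    and "u0 \<in> V" and "u1 \<in> V" and "u0 \<noteq> u1"
    and "shortest_path E u0 u1 P1" and "shortest_path E u0 u1 P2"
    and "k < length P2" and "u2 = P2 ! k" and "u2 \<noteq> u0" and "u2 \<noteq> u1"
  shows "real (hausdorff E P1 P2)
           \<le> 6 * delta_tri E P1 (take (Suc k) P2) (drop k P2) + 2"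
proof -
  have sym: "\<forall>x y. E x y \<longrightarrow> E y x" using assms(1) by (simp add: connected_graph_def graph_def)
  define S where "S = set P1 \<union> set (take (Suc k) P2) \<union> set (drop k P2)"
  define D where "D = delta_tri E P1 (take (Suc k) P2) (drop k P2)"
  have len: "length P1 = length P2" using assms(6,7) by (simp add: shortest_path_def)
  have ne1: "P1 \<noteq> []" using assms(6) by (simp add: shortest_path_def walk_def)
  have ne2: "P2 \<noteq> []" using assms(7) by (simp add: shortest_path_def walk_def)
  have finS: "finite S" by (simp add: S_def)
  have P1S: "set P1 \<subseteq> S" by (auto simp: S_def)
  have P2S: "set P2 \<subseteq> S"
  proof -
    have "set P2 = set (take k P2) \<union> set (drop k P2)" by (metis append_take_drop_id set_append)
    also have "\<dots> \<subseteq> set (take (Suc k) P2) \<union> set (drop k P2)"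
      using set_take_subset_set_take[of k "Suc k" P2] by (auto simp del: take_Suc)
    finally show ?thesis by (auto simp: S_def)
  qed
  have u0S: "u0 \<in> S" using assms(6) ne1 P1S by (auto simp: shortest_path_def)
  have u1S: "u1 \<in> S" using assms(6) ne1 P1S by (auto simp: shortest_path_def)
  have key: "real (gdist E (P1 ! i) (P2 ! i)) \<le> 2 * D" if i: "i < length P1" for i
  proof -
    have "delta4 E u0 u1 (P1 ! i) (P2 ! i) \<le> D"
      unfolding D_def delta_tri_def Let_def S_def[symmetric]
      by (rule max_ge[OF finS u0S u1S]) (use P1S P2S i len in auto)
    then show ?thesis using core[OF sym assms(6,7) i] by simp
  qed
  have D0: "0 \<le> D" using key[of 0] ne1 by simp
  have h1: "real (Max ((\<lambda>v1. Min ((\<lambda>v2. gdist E v1 v2) ` set P2)) ` set P1)) \<le> 2 * D"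
  proof -
    have "\<forall>m \<in> (\<lambda>v1. Min ((\<lambda>v2. gdist E v1 v2) ` set P2)) ` set P1. real m \<le> 2 * D"
    proof
      fix m assume "m \<in> (\<lambda>v1. Min ((\<lambda>v2. gdist E v1 v2) ` set P2)) ` set P1"
      then obtain i where i: "i < length P1" and m: "m = Min ((\<lambda>v2. gdist E (P1 ! i) v2) ` set P2)"
        by (auto simp: in_set_conv_nth)
      have "m \<le> gdist E (P1 ! i) (P2 ! i)" unfolding m using i len by (intro Min_le) auto
      then show "real m \<le> 2 * D" using key[OF i] by linarith
    qed
    moreover have "Max ((\<lambda>v1. Min ((\<lambda>v2. gdist E v1 v2) ` set P2)) ` set P1)
       \<in> (\<lambda>v1. Min ((\<lambda>v2. gdist E v1 v2) ` set P2)) ` set P1"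
      using ne1 by (intro Max_in) auto
    ultimately show ?thesis by blast
  qed
  have h2: "real (Max ((\<lambda>v2. Min ((\<lambda>v1. gdist E v1 v2) ` set P1)) ` set P2)) \<le> 2 * D"
  proof -
    have "\<forall>m \<in> (\<lambda>v2. Min ((\<lambda>v1. gdist E v1 v2) ` set P1)) ` set P2. real m \<le> 2 * D"
    proof
      fix m assume "m \<in> (\<lambda>v2. Min ((\<lambda>v1. gdist E v1 v2) ` set P1)) ` set P2"
      then obtain i where i: "i < length P2" and m: "m = Min ((\<lambda>v1. gdist E v1 (P2 ! i)) ` set P1)"
        by (auto simp: in_set_conv_nth)
      have i1: "i < length P1" using i len by simp
      have "m \<le> gdist E (P1 ! i) (P2 ! i)" unfolding m using i1 by (intro Min_le) auto
      then show "real m \<le> 2 * D" using key[OF i1] by linarith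
    qed
    moreover have "Max ((\<lambda>v2. Min ((\<lambda>v1. gdist E v1 v2) ` set P1)) ` set P2)
       \<in> (\<lambda>v2. Min ((\<lambda>v1. gdist E v1 v2) ` set P1)) ` set P2"
      using ne2 by (intro Max_in) auto
    ultimately show ?thesis by blast
  qed
  have "real (hausdorff E P1 P2) \<le> 2 * D"
    unfolding hausdorff_def using h1 h2 by (simp add: max_def)
  then show ?thesis using D0 unfolding D_def by linarith
qed

end
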